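(* Let $G_1,G_2,H_1,H_2\in SL^+_{sym}(2)$. Then $$K^{min}=\sqrt{\lambda_{\max}\big(G_1^{-1/2}G_2G_1^{-1/2}\big)\ \lambda_{\max}\big(H_1^{-1/2}H_2H_1^{-1/2}\big)}.$$
   Context: $SL^+_{sym}(2)$: real symmetric positive definite $2\times2$ matrices with determinant $1$; $SL(2)$: real $2\times2$ matrices of determinant $1$; $\lambda_{\max}(M)$: largest eigenvalue of a symmetric $M$; $M^{-1/2}$ is the positive definite square root of $M^{-1}$. For $G_1,G_2,H_1,H_2\in SL^+_{sym}(2)$ define $$K^{min}:=\min_{A,B\in SL(2)}\ \max_{i=1,2}\ \lambda_{\max}(B^TG_iB)\,\lambda_{\max}(A^TH_iA).$$ *)

theory Defs
  imports "HOL-Analysis.Analysis"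
begin

type_synonym mat2 = "real^2^2"

definition sym_mat :: "mat2 \<Rightarrow> bool" where
  "sym_mat M \<longleftrightarrow> transpose M = M"

definition pos_def :: "mat2 \<Rightarrow> bool" where
  "pos_def M \<longleftrightarrow> sym_mat M \<and> (\<forall>x::real^2. x \<noteq> 0 \<longrightarrow> x \<bullet> (M *v x) > 0)"

definition SL_sym_pos :: "mat2 set" where
  "SL_sym_pos = {M. pos_def M \<and> det M = 1}"

definition SL2 :: "mat2 set" where
  "SL2 = {A. det A = 1}"

definition eigenvalues :: "mat2 \<Rightarrow> real set" where
  "eigenvalues M = {c. \<exists>v. v \<noteq> 0 \<and> M *v v = c *\<^sub>R v}"

definition lambda_max :: "mat2 \<Rightarrow> real" where
  "lambda_max M = Max (eigenvalues M)"

definition inv_sqrt :: "mat2 \<Rightarrow> mat2" where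
  "inv_sqrt M = (THE S. pos_def S \<and> S ** S = matrix_inv M)"

definition K_values :: "mat2 \<Rightarrow> mat2 \<Rightarrow> mat2 \<Rightarrow> mat2 \<Rightarrow> real set" where
  "K_values G1 G2 H1 H2 =
     {max (lambda_max (transpose B ** G1 ** B) * lambda_max (transpose A ** H1 ** A))
          (lambda_max (transpose B ** G2 ** B) * lambda_max (transpose A ** H2 ** A))
      | A B. A \<in> SL2 \<and> B \<in> SL2}"

text \<open>K^min: the minimum over A,B in SL(2); defined as the infimum, attainment is stated separately.\<close>
definition K_min :: "mat2 \<Rightarrow> mat2 \<Rightarrow> mat2 \<Rightarrow> mat2 \<Rightarrow> real" where
  "K_min G1 G2 H1 H2 = Inf (K_values G1 G2 H1 H2)"

end

theory Submission
  imports Defs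
begin


lemma mat2_eq: "(M::mat2) = N \<longleftrightarrow> M$1$1 = N$1$1 \<and> M$1$2 = N$1$2 \<and> M$2$1 = N$2$1 \<and> M$2$2 = N$2$2"
  by (auto simp: vec_eq_iff forall_2)

lemma vec2_eq: "(v::real^2) = w \<longleftrightarrow> v$1 = w$1 \<and> v$2 = w$2"
  by (auto simp: vec_eq_iff forall_2)

lemma tr2: "trace (M::mat2) = M$1$1 + M$2$2"
  by (simp add: trace_def sum_2)

lemma mult2: "((M::mat2) ** N)$i$j = M$i$1 * N$1$j + M$i$2 * N$2$j"
  by (simp add: matrix_matrix_mult_def sum_2)

lemma mv2: "((M::mat2) *v v)$i = M$i$1 * v$1 + M$i$2 * v$2"
  by (simp add: matrix_vector_mult_def sum_2)

lemma inner2: "(v::real^2) \<bullet> w = v$1*w$1 + v$2*w$2"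
  by (simp add: inner_vec_def sum_2)

lemma eigen_char: "c \<in> eigenvalues (M::mat2) \<longleftrightarrow> c*c - trace M * c + det M = 0"
proof
  assume "c \<in> eigenvalues M"
  then obtain v where v: "v \<noteq> 0" "M *v v = c *\<^sub>R v" by (auto simp: eigenvalues_def)
  have e1: "M$1$1 * v$1 + M$1$2 * v$2 = c * v$1" and e2: "M$2$1 * v$1 + M$2$2 * v$2 = c * v$2"
    using v(2) by (auto simp: vec2_eq mv2)
  have "v$1 \<noteq> 0 \<or> v$2 \<noteq> 0" using v(1) by (auto simp: vec2_eq)
  moreover have "(c*c - trace M * c + det M) * v$1 = (M$2$2 - c)*((M$1$1* v$1 + M$1$2* v$2) - c* v$1) - M$1$2*((M$2$1* v$1 + M$2$2* v$2) - c* v$2)"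
    by (simp add: tr2 det_2 algebra_simps)
  then have "(c*c - trace M * c + det M) * v$1 = 0" using e1 e2 by simp
  moreover have "(c*c - trace M * c + det M) * v$2 = (M$1$1 - c)*((M$2$1* v$1 + M$2$2* v$2) - c* v$2) - M$2$1*((M$1$1* v$1 + M$1$2* v$2) - c* v$1)"
    by (simp add: tr2 det_2 algebra_simps)
  then have "(c*c - trace M * c + det M) * v$2 = 0" using e1 e2 by simp
  ultimately show "c*c - trace M * c + det M = 0" by auto
next
  assume h: "c*c - trace M * c + det M = 0"
  let ?a = "M$1$1" and ?b = "M$1$2" and ?e = "M$2$1" and ?d = "M$2$2"
  have h': "(?a - c) * (?d - c) - ?b * ?e = 0" using h by (simp add: tr2 det_2 algebra_simps)
  define v :: "real^2" where "v = (if ?b \<noteq> 0 \<or> c \<noteq> ?a then vector [?b, c - ?a]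
      else if ?d \<noteq> c \<or> ?e \<noteq> 0 then vector [?d - c, - ?e] else vector [1, 0])"
  have "v \<noteq> 0" unfolding v_def by (auto simp: vec2_eq)
  moreover have "M *v v = c *\<^sub>R v" using h'
    unfolding v_def by (auto simp: vec2_eq mv2 algebra_simps)
  ultimately show "c \<in> eigenvalues M" by (auto simp: eigenvalues_def)
qed




definition ell :: "real \<Rightarrow> real" where "ell t = (t + sqrt (t*t - 4)) / 2"

lemma ell_props:
  assumes "t \<ge> 2"
  shows "ell t \<ge> 1" "ell t + 1 / ell t = t" "ell t - 1 / ell t = sqrt (t*t - 4)"
proof -
  let ?X = "sqrt (t*t - 4)"
  have t4: "2*2 \<le> t*t" by (rule mult_mono) (use assms in auto)
  have X0: "?X \<ge> 0" using t4 by simp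
  have XX: "?X * ?X = t*t - 4" using t4 by simp
  have h2: "2 \<le> t + ?X" using X0 assms by (rule add_increasing2)
  then show "ell t \<ge> 1" unfolding ell_def by simp
  have pos: "t + ?X > 0" using h2 by simp
  have inv: "1 / ell t = (t - ?X)/2" unfolding ell_def using pos XX
    by (simp add: field_simps)
  show "ell t + 1 / ell t = t" using inv by (simp add: ell_def field_simps)
  show "ell t - 1 / ell t = sqrt (t*t - 4)" using inv by (simp add: ell_def field_simps)
qed

lemma ell_inv:
  assumes "L \<ge> 1" shows "ell (L + 1/L) = L"
proof -
  have L0: "L > 0" using assms by simp
  have "(L + 1/L) * (L + 1/L) - 4 = (L - 1/L) * (L - 1/L)" using L0 by (simp add: field_simps)
  moreover have "L - 1/L \<ge> 0" using assms L0 mult_mono[OF assms assms] by (simp add: field_simps)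
  ultimately have "sqrt ((L + 1/L) * (L + 1/L) - 4) = L - 1/L" by simp
  then show ?thesis by (simp add: ell_def)
qed

lemma ell_mono:
  assumes "2 \<le> s" "s \<le> t" shows "ell s \<le> ell t"
proof -
  have "s * s \<le> t*t" using assms by (simp add: mult_mono)
  then have "sqrt (s * s-4) \<le> sqrt (t*t-4)" by simp
  then show ?thesis unfolding ell_def using assms by (intro divide_right_mono add_mono) auto
qed

lemma lambda_max_ell:
  assumes "det (M::mat2) = 1" "trace M \<ge> 2"
  shows "lambda_max M = ell (trace M)"
proof -
  obtain L where L1: "L \<ge> 1" and Ls: "L + 1/L = trace M" using ell_props assms(2) by blast
  have L0: "L > 0" using L1 by simp
  have "eigenvalues M = {L, 1/L}"
  proof -
    have eq: "\<And>c. c*c - trace M * c + det M = (c - L) * (c - 1/L)"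
      unfolding assms(1) Ls[symmetric] using L0 by (simp add: field_simps)
    have "\<And>c. c \<in> eigenvalues M \<longleftrightarrow> c = L \<or> c = 1/L"
      by (simp only: eigen_char eq mult_eq_0_iff right_minus_eq)
    then show ?thesis by blast
  qed
  moreover have "1/L \<le> L" using L1 by (smt (verit) divide_le_eq_1)
  ultimately have "lambda_max M = L" by (simp add: lambda_max_def max_def)
  moreover have "ell (trace M) = L" using ell_inv[OF L1] Ls by simp
  ultimately show ?thesis by simp
qed




lemma tr_real: fixes a b c :: real assumes "a > 0" "c > 0" "a*c - b*b = 1" shows "2 \<le> a + c"
proof -
  have "(a+c)^2 = (a-c)^2 + 4*(a*c)" by (simp add: power2_eq_square algebra_simps)
  also have "\<dots> = (a-c)^2 + 4*(1 + b*b)" using assms(3) by (simp add: algebra_simps)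
  finally have "2^2 \<le> (a+c)^2" by (simp add: power2_eq_square)
  then show ?thesis by (rule power2_le_imp_le) (use assms in simp)
qed

lemma key_real:
  fixes a b c d e g :: real
  assumes pos: "a > 0" "c > 0" "d > 0" "g > 0" and dt: "a*c - b*b = 1" "d*g - e*e = 1"
  shows "2 \<le> c*d - 2*b*e + a*g \<and> ell (c*d - 2*b*e + a*g) \<le> ell (a+c) * ell (d+g)"
proof -
  let ?t = "c*d - 2*b*e + a*g"
  have p2: "2 \<le> a + c" by (rule tr_real[OF pos(1,2) dt(1)])
  have q2: "2 \<le> d + g" by (rule tr_real[OF pos(3,4) dt(2)])
  have "(c*d+a*g)^2 = (c*d - a*g)^2 + 4*(a*c)*(d*g)" by (simp add: power2_eq_square algebra_simps)
  also have "\<dots> = (c*d - a*g)^2 + 4*(1+b*b)*(1+e*e)"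
  proof -
    have ac: "a*c = 1+b*b" and dg: "d*g = 1+e*e" using dt by simp_all
    show ?thesis by (simp only: ac dg)
  qed
  also have "\<dots> = (c*d - a*g)^2 + 4*(b-e)^2 + (2+2*b*e)^2" by (simp add: power2_eq_square algebra_simps)
  finally have "(2+2*b*e)^2 \<le> (c*d+a*g)^2" by simp
  then have "2+2*b*e \<le> c*d+a*g" by (rule power2_le_imp_le) (use pos in simp)
  then have t2: "2 \<le> ?t" by simp
  obtain L where L: "L \<ge> 1" "L + 1/L = a + c" "L - 1/L = sqrt ((a+c)*(a+c) - 4)" "ell (a+c) = L"
    using ell_props[OF p2] by blast
  obtain M where M: "M \<ge> 1" "M + 1/M = d + g" "M - 1/M = sqrt ((d+g)*(d+g) - 4)" "ell (d+g) = M"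
    using ell_props[OF q2] by blast
  let ?s = "(a-c)*(d-g) + 4*b*e"
  let ?U = "(a-c)^2 + 4*b^2" and ?V = "(d-g)^2 + 4*e^2"
  have U: "(a+c)*(a+c) - 4 = ?U" using dt by (simp add: power2_eq_square algebra_simps)
  have V: "(d+g)*(d+g) - 4 = ?V" using dt by (simp add: power2_eq_square algebra_simps)
  have "?U * ?V = ?s^2 + (2*e*(a-c) - 2*b*(d-g))^2" by (simp add: power2_eq_square algebra_simps)
  then have "?s^2 \<le> ?U * ?V" by simp
  then have "sqrt (?s^2) \<le> sqrt (?U * ?V)" by (rule real_sqrt_le_mono)
  then have "- ?s \<le> sqrt ?U * sqrt ?V" by (simp add: real_sqrt_mult)
  then have s: "- ?s \<le> (L - 1/L) * (M - 1/M)" using L(3) M(3) U V by simp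
  have "2 * ?t = (a+c)*(d+g) - ?s" by (simp add: algebra_simps)
  also have "\<dots> \<le> (L + 1/L)*(M + 1/M) + (L - 1/L) * (M - 1/M)" using s L(2) M(2) by simp
  also have "\<dots> = 2 * (L*M + 1/(L*M))" using L(1) M(1) by (simp add: field_simps)
  finally have "?t \<le> L*M + 1/(L*M)" by simp
  then have "ell ?t \<le> ell (L*M + 1/(L*M))" using t2 by (rule ell_mono[rotated])
  also have "\<dots> = L*M" using L(1) M(1) by (intro ell_inv) (simp add: mult_mono[of 1 L 1 M, simplified])
  finally show ?thesis using t2 L(4) M(4) by simp
qed




definition adj2 :: "mat2 \<Rightarrow> mat2" where
  "adj2 M = vector [vector [M$2$2, - M$1$2], vector [- M$2$1, M$1$1]]"

lemma adj2_simps[simp]: "adj2 M $1$1 = M$2$2" "adj2 M $1$2 = - M$1$2" "adj2 M $2$1 = - M$2$1" "adj2 M $2$2 = M$1$1"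
  by (simp_all add: adj2_def)

lemma spd_entries:
  assumes "M \<in> SL_sym_pos"
  shows "M$1$1 > 0" "M$2$2 > 0" "M$2$1 = M$1$2" "M$1$1 * M$2$2 - M$1$2 * M$1$2 = 1"
proof -
  have sym: "transpose M = M" and pos: "\<And>x. x \<noteq> 0 \<Longrightarrow> x \<bullet> (M *v x) > 0" and d: "det M = 1"
    using assms by (auto simp: SL_sym_pos_def pos_def_def sym_mat_def)
  have "(transpose M)$1$2 = M$1$2" using sym by simp
  then show s: "M$2$1 = M$1$2" by (simp add: transpose_def)
  have "(vector [1,0] :: real^2) \<noteq> 0" by (simp add: vec2_eq)
  from pos[OF this] show "M$1$1 > 0" by (simp add: inner2 mv2)
  have "(vector [0,1] :: real^2) \<noteq> 0" by (simp add: vec2_eq)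
  from pos[OF this] show "M$2$2 > 0" by (simp add: inner2 mv2)
  show "M$1$1 * M$2$2 - M$1$2 * M$1$2 = 1" using d s by (simp add: det_2)
qed

lemma spd_of_entries:
  assumes "M$2$1 = M$1$2" "M$1$1 > 0" "M$1$1 * M$2$2 - M$1$2 * M$1$2 > 0"
  shows "pos_def M"
proof -
  have sym: "sym_mat M" unfolding sym_mat_def using assms(1) by (simp add: mat2_eq transpose_def)
  have "x \<bullet> (M *v x) > 0" if x: "x \<noteq> 0" for x :: "real^2"
  proof -
    let ?a = "M$1$1" and ?b = "M$1$2" and ?c = "M$2$2"
    have Q: "x \<bullet> (M *v x) = ?a*(x$1*x$1) + 2*?b*(x$1*x$2) + ?c*(x$2*x$2)"
      using assms(1) by (simp add: inner2 mv2 algebra_simps)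
    show ?thesis
    proof (cases "x$2 = 0")
      case True
      then have "x$1 \<noteq> 0" using x by (simp add: vec2_eq)
      then have "x$1 * x$1 > 0" by (metis not_real_square_gt_zero)
      then show ?thesis using Q True assms(2) by simp
    next
      case False
      have "?a * (x \<bullet> (M *v x)) = (?a*x$1 + ?b*x$2)^2 + (?a*?c - ?b*?b)*(x$2*x$2)"
        unfolding Q by (simp add: power2_eq_square algebra_simps)
      moreover have "(?a*?c - ?b*?b)*(x$2*x$2) > 0"
      proof -
        have "x$2*x$2 > 0" using False by (metis not_real_square_gt_zero)
        then show ?thesis using assms(3) by simp
      qed
      ultimately have "?a * (x \<bullet> (M *v x)) > 0"
        by (metis add_nonneg_pos zero_le_power2)
      then show ?thesis using assms(2) by (simp add: zero_less_mult_iff)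
    qed
  qed
  then show ?thesis using sym by (simp add: pos_def_def)
qed

lemma spd_tr: assumes "M \<in> SL_sym_pos" shows "trace M \<ge> 2"
  using tr_real[OF spd_entries(1,2,4)[OF assms]] by (simp add: tr2)

lemma lam_spd: assumes "M \<in> SL_sym_pos" shows "lambda_max M = ell (trace M)"
  using assms spd_tr[OF assms] by (intro lambda_max_ell) (auto simp: SL_sym_pos_def)

lemma congr_spd:
  assumes G: "G \<in> SL_sym_pos" and B: "det B = 1"
  shows "transpose B ** G ** B \<in> SL_sym_pos"
proof -
  let ?P = "transpose B ** G ** B"
  have "det ?P = 1" using G B by (simp add: det_mul det_transpose SL_sym_pos_def)
  moreover have "transpose ?P = ?P" using G
    by (simp add: matrix_transpose_mul SL_sym_pos_def pos_def_def sym_mat_def matrix_mul_assoc)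
  moreover have "x \<bullet> (?P *v x) > 0" if x: "x \<noteq> 0" for x
  proof -
    let ?y = "B *v x"
    have "?y \<noteq> 0"
    proof
      assume y: "?y = 0"
      have "x$1 = B$2$2 * ?y$1 - B$1$2 * ?y$2" "x$2 = B$1$1 * ?y$2 - B$2$1 * ?y$1"
        using B by (simp_all add: mv2 det_2 algebra_simps)
      then show False using y x by (simp add: vec2_eq)
    qed
    then have "?y \<bullet> (G *v ?y) > 0" using G by (simp add: SL_sym_pos_def pos_def_def)
    moreover have "x \<bullet> (?P *v x) = ?y \<bullet> (G *v ?y)"
      by (simp add: inner2 mv2 mult2 transpose_def algebra_simps)
    ultimately show ?thesis by simp
  qed
  ultimately show ?thesis by (simp add: SL_sym_pos_def pos_def_def sym_mat_def)
qed

lemma trace_congr: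
  assumes "det B = 1"
  shows "trace (adj2 (transpose B ** G1 ** B) ** (transpose B ** G2 ** B)) = trace (adj2 G1 ** G2)"
proof -
  have "trace (adj2 (transpose B ** G1 ** B) ** (transpose B ** G2 ** B)) = (det B)^2 * trace (adj2 G1 ** G2)"
    by (simp add: tr2 mult2 transpose_def det_2 power2_eq_square algebra_simps)
  then show ?thesis using assms by simp
qed

lemma lower:
  assumes "G1 \<in> SL_sym_pos" "G2 \<in> SL_sym_pos" "det B = 1"
  shows "2 \<le> trace (adj2 G1 ** G2)"
    "ell (trace (adj2 G1 ** G2)) \<le> lambda_max (transpose B ** G1 ** B) * lambda_max (transpose B ** G2 ** B)"
proof -
  have k: "2 \<le> trace (adj2 P ** Q) \<and> ell (trace (adj2 P ** Q)) \<le> ell (trace P) * ell (trace Q)"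
    if P: "P \<in> SL_sym_pos" and Q: "Q \<in> SL_sym_pos" for P Q
  proof -
    note p = spd_entries[OF P] and q = spd_entries[OF Q]
    have "trace (adj2 P ** Q) = P$2$2 * Q$1$1 - 2 * P$1$2 * Q$1$2 + P$1$1 * Q$2$2"
      using p(3) q(3) by (simp add: tr2 mult2)
    then show ?thesis using key_real[OF p(1) p(2) q(1) q(2) p(4) q(4)] by (simp add: tr2)
  qed
  show "2 \<le> trace (adj2 G1 ** G2)" using k[OF assms(1,2)] by simp
  have P: "transpose B ** G1 ** B \<in> SL_sym_pos" and Q: "transpose B ** G2 ** B \<in> SL_sym_pos"
    using congr_spd assms by auto
  show "ell (trace (adj2 G1 ** G2)) \<le> lambda_max (transpose B ** G1 ** B) * lambda_max (transpose B ** G2 ** B)"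
    using k[OF P Q] trace_congr[OF assms(3), of G1 G2] by (simp add: lam_spd[OF P] lam_spd[OF Q])
qed

lemma matrix_inv_adj2:
  assumes "det (M::mat2) = 1" shows "matrix_inv M = adj2 M"
proof -
  have r: "M ** adj2 M = mat 1" and l: "adj2 M ** M = mat 1" using assms
    by (simp_all add: mat2_eq mult2 det_2 mat_def algebra_simps)
  then have "\<exists>A'. M ** A' = mat 1 \<and> A' ** M = mat 1" by blast
  then have s: "M ** matrix_inv M = mat 1 \<and> matrix_inv M ** M = mat 1"
    unfolding matrix_inv_def by (rule someI_ex)
  have "matrix_inv M = matrix_inv M ** (M ** adj2 M)" using r by simp
  also have "\<dots> = adj2 M" using s by (simp add: matrix_mul_assoc)
  finally show ?thesis .
qed




lemma pd_entries:
  assumes "pos_def S"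
  shows "S$2$1 = S$1$2" "S$1$1 > 0" "S$1$1 * S$2$2 - S$1$2 * S$1$2 > 0"
proof -
  have sym: "transpose S = S" and pos: "\<And>x. x \<noteq> 0 \<Longrightarrow> x \<bullet> (S *v x) > 0"
    using assms by (auto simp: pos_def_def sym_mat_def)
  have "(transpose S)$1$2 = S$1$2" using sym by simp
  then show s: "S$2$1 = S$1$2" by (simp add: transpose_def)
  have "(vector [1,0] :: real^2) \<noteq> 0" by (simp add: vec2_eq)
  from pos[OF this] show a: "S$1$1 > 0" by (simp add: inner2 mv2)
  have "(vector [S$1$2, - S$1$1] :: real^2) \<noteq> 0" using a by (simp add: vec2_eq)
  from pos[OF this] have "0 < S$1$1 * (S$1$1 * S$2$2 - S$1$2 * S$1$2)"
    using s by (simp add: inner2 mv2 algebra_simps)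
  then show "S$1$1 * S$2$2 - S$1$2 * S$1$2 > 0" using a by (simp add: zero_less_mult_iff)
qed

lemma sqrt_unique:
  assumes G: "G \<in> SL_sym_pos"
  defines "N \<equiv> adj2 G"
  defines "r \<equiv> sqrt (trace N + 2)"
  defines "S0 \<equiv> vector [vector [(N$1$1 + 1)/r, N$1$2/r], vector [N$2$1/r, (N$2$2 + 1)/r]] :: mat2"
  shows "pos_def S0 \<and> S0 ** S0 = N" "pos_def S \<Longrightarrow> S ** S = N \<Longrightarrow> S = S0"
proof -
  note g = spd_entries[OF G]
  have n: "N$2$1 = N$1$2" "N$1$1 > 0" "N$1$1 * N$2$2 - N$1$2 * N$1$2 = 1"
    using g by (auto simp: N_def algebra_simps)
  have t2: "trace N \<ge> 2" using tr_real[OF n(2) _ n(3)] g(1) by (simp add: tr2 N_def)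
  have r0: "r > 0" using t2 by (simp add: r_def)
  have rr: "r * r = N$1$1 + N$2$2 + 2" using t2 by (simp add: r_def tr2)
  have tp: "N$1$1 + N$2$2 \<ge> 2" using t2 by (simp add: tr2)
  have "pos_def S0"
  proof (rule spd_of_entries)
    show "S0$2$1 = S0$1$2" using n by (simp add: S0_def)
    show "S0$1$1 > 0" using n r0 by (simp add: S0_def)
    have "S0$1$1 * S0$2$2 - S0$1$2 * S0$1$2 = ((N$1$1+1)*(N$2$2+1) - N$1$2*N$1$2) / (r*r)"
      using r0 by (simp add: S0_def field_simps)
    also have "\<dots> = 1" using rr n(3) r0 tp by (simp add: field_simps algebra_simps)
    finally show "S0$1$1 * S0$2$2 - S0$1$2 * S0$1$2 > 0" by simp
  qed
  moreover have "S0 ** S0 = N"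
  proof -
    have rne: "r * r \<noteq> 0" using r0 by simp
    let ?n11 = "N$1$1" and ?n12 = "N$1$2" and ?n22 = "N$2$2"
    have m: "(S0**S0)$1$1 = ((?n11+1)*(?n11+1) + ?n12*?n12)/(r*r)"
      "(S0**S0)$1$2 = ((?n11+1)*?n12 + ?n12*(?n22+1))/(r*r)"
      "(S0**S0)$2$1 = (?n12*(?n11+1) + (?n22+1)*?n12)/(r*r)"
      "(S0**S0)$2$2 = (?n12*?n12 + (?n22+1)*(?n22+1))/(r*r)"
      using n(1) r0 by (simp_all add: mult2 S0_def field_simps)
    have i1: "(?n11+1)*(?n11+1) + ?n12*?n12 = ?n11 * (?n11 + ?n22 + 2) + (1 + ?n12*?n12 - ?n11*?n22)"
      by (simp add: algebra_simps)
    have i4: "?n12*?n12 + (?n22+1)*(?n22+1) = ?n22 * (?n11 + ?n22 + 2) + (1 + ?n12*?n12 - ?n11*?n22)"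
      by (simp add: algebra_simps)
    have i2: "(?n11+1)*?n12 + ?n12*(?n22+1) = ?n12 * (?n11 + ?n22 + 2)" by (simp add: algebra_simps)
    have i3: "?n12*(?n11+1) + (?n22+1)*?n12 = ?n12 * (?n11 + ?n22 + 2)" by (simp add: algebra_simps)
    have z: "1 + ?n12*?n12 - ?n11*?n22 = 0" using n(3) by simp
    show ?thesis unfolding mat2_eq m i1 i2 i3 i4 z rr[symmetric] using rne n(1) by simp
  qed
  ultimately show "pos_def S0 \<and> S0 ** S0 = N" by simp
  assume S: "pos_def S" "S ** S = N"
  note s = pd_entries[OF S(1)]
  let ?a = "S$1$1" and ?b = "S$1$2" and ?c = "S$2$2"
  have e1: "N$1$1 = ?a*?a + ?b*?b" and e2: "N$1$2 = ?b*(?a+?c)" and e3: "N$2$2 = ?b*?b + ?c*?c"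
    and e4: "N$2$1 = ?b*(?a+?c)"
    using S(2) s(1) by (auto simp: mat2_eq mult2 algebra_simps)
  have "(?a*?c - ?b*?b)^2 = N$1$1 * N$2$2 - N$1$2 * N$1$2"
    unfolding e1 e2 e3 by (simp add: power2_eq_square algebra_simps)
  then have "(?a*?c - ?b*?b)^2 = 1^2" using n(3) by simp
  then have d: "?a*?c - ?b*?b = 1" by (rule power2_eq_imp_eq) (use s(3) in auto)
  have c0: "?c > 0" using s(2) s(3) by (smt (verit) mult_nonneg_nonpos zero_le_square)
  have "r * r = (?a + ?c) * (?a + ?c)" using rr e1 e3 d by (simp add: algebra_simps)
  then have "r^2 = (?a + ?c)^2" by (simp add: power2_eq_square)
  then have rs: "r = ?a + ?c" by (rule power2_eq_imp_eq) (use r0 s(2) c0 in auto)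
  show "S = S0" unfolding mat2_eq S0_def using rs r0 e1 e2 e3 e4 d s(1)
    by (simp add: field_simps algebra_simps)
qed

lemma inv_sqrt_char:
  assumes G: "G \<in> SL_sym_pos"
  shows "pos_def (inv_sqrt G) \<and> inv_sqrt G ** inv_sqrt G = adj2 G"
proof -
  have mi: "matrix_inv G = adj2 G" using G by (intro matrix_inv_adj2) (simp add: SL_sym_pos_def)
  obtain S0 where S0: "pos_def S0 \<and> S0 ** S0 = adj2 G" "\<And>S. pos_def S \<Longrightarrow> S ** S = adj2 G \<Longrightarrow> S = S0"
    using sqrt_unique[OF G] by blast
  have "inv_sqrt G = S0" unfolding inv_sqrt_def mi
    by (rule the_equality) (use S0 in auto)
  then show ?thesis using S0 by simp
qed

lemma lam_inv_sqrt:
  assumes G1: "G1 \<in> SL_sym_pos" and G2: "G2 \<in> SL_sym_pos"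
  shows "lambda_max (inv_sqrt G1 ** G2 ** inv_sqrt G1) = ell (trace (adj2 G1 ** G2))"
proof -
  let ?S = "inv_sqrt G1"
  have SS: "?S ** ?S = adj2 G1" using inv_sqrt_char[OF G1] by simp
  have "det (?S ** G2 ** ?S) = det (?S ** ?S) * det G2" by (simp add: det_mul)
  also have "\<dots> = 1" using SS G1 G2 spd_entries[OF G1] by (simp add: SL_sym_pos_def det_2 algebra_simps)
  finally have d: "det (?S ** G2 ** ?S) = 1" .
  have "trace (?S ** G2 ** ?S) = trace (?S ** (?S ** G2))" by (rule trace_mul_sym)
  also have "\<dots> = trace (adj2 G1 ** G2)" by (simp add: matrix_mul_assoc SS)
  finally have t: "trace (?S ** G2 ** ?S) = trace (adj2 G1 ** G2)" .
  have "det (mat 1 :: mat2) = 1" by simp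
  from lower(1)[OF G1 G2 this] have "2 \<le> trace (adj2 G1 ** G2)" .
  then show ?thesis using lambda_max_ell[OF d] t by simp
qed




lemma tr_chol:
  fixes q :: real assumes u0: "(u::real) > 0"
  defines "Bm \<equiv> vector [vector [u, 0], vector [q/u, 1/u]] :: mat2"
  shows "trace (transpose Bm ** G ** Bm) = G$1$1*(u*u) + (G$1$2+G$2$1)*q + G$2$2*((q*q+1)/(u*u))"
  using u0 by (simp add: Bm_def tr2 mult2 transpose_def field_simps)

lemma lam_ge1: assumes "G \<in> SL_sym_pos" "det B = 1" shows "lambda_max (transpose B ** G ** B) \<ge> 1"
proof -
  have P: "transpose B ** G ** B \<in> SL_sym_pos" using congr_spd assms by auto
  show ?thesis using lam_spd[OF P] ell_props(1)[OF spd_tr[OF P]] by simp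
qed

lemma attain:
  assumes G1: "G1 \<in> SL_sym_pos" and G2: "G2 \<in> SL_sym_pos"
  shows "\<exists>B \<in> SL2. lambda_max (transpose B ** G1 ** B) = sqrt (ell (trace (adj2 G1 ** G2)))
                 \<and> lambda_max (transpose B ** G2 ** B) = sqrt (ell (trace (adj2 G1 ** G2)))"
proof -
  note g1 = spd_entries[OF G1] and g2 = spd_entries[OF G2]
  define a where "a = G1$1$1" define b where "b = G1$1$2" define c where "c = G1$2$2"
  define d where "d = G2$1$1" define e where "e = G2$1$2" define g where "g = G2$2$2"
  define \<tau> where "\<tau> = trace (adj2 G1 ** G2)"
  have tdef: "\<tau> = c*d - 2*b*e + a*g"
    using g1(3) g2(3) by (simp add: \<tau>_def tr2 mult2 a_def b_def c_def d_def e_def g_def)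
  have t2: "2 \<le> \<tau>" unfolding \<tau>_def by (rule lower(1)[OF G1 G2, of "mat 1"]) simp
  have dt1: "a*c - b*b = 1" and dt2: "d*g - e*e = 1" using g1(4) g2(4) by (simp_all add: a_def b_def c_def d_def e_def g_def)
  have pos: "a > 0" "c > 0" "d > 0" "g > 0" using g1 g2 by (simp_all add: a_def c_def d_def g_def)
  define s where "s = sqrt (2 + \<tau>)"
  have ss: "s * s = 2 + \<tau>" using t2 by (simp add: s_def)
  have "sqrt (2^2) \<le> s" unfolding s_def using t2 by (intro real_sqrt_le_mono) simp
  then have s2: "2 \<le> s" by simp
  then have s0: "s > 0" by simp
  define p where "p = (c+g)/s"
  define q where "q = -(b+e)/s"
  have p0: "p > 0" using pos s0 by (simp add: p_def)
  have ps: "p* s = c+g" and qs: "q* s = -(b+e)" using s0 by (simp_all add: p_def q_def)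
  define u where "u = sqrt p"
  have u0: "u > 0" and uu: "u*u = p" using p0 by (simp_all add: u_def)
  define B :: mat2 where "B = vector [vector [u, 0], vector [q/u, 1/u]]"
  have dB: "det B = 1" using u0 by (simp add: B_def det_2)
  have key1: "(q*q+1)*(s* s) = (a+d)*(c+g)"
  proof -
    have "(q*q+1)*(s* s) = (q* s)*(q* s) + s* s" by (simp add: algebra_simps)
    also have "\<dots> = (b+e)*(b+e) + 2 + (c*d - 2*b*e + a*g)" using qs ss tdef by simp (simp add: algebra_simps)
    also have "\<dots> = (a+d)*(c+g) - (a*c - b*b - 1) - (d*g - e*e - 1)" by (simp add: algebra_simps)
    also have "\<dots> = (a+d)*(c+g)" using dt1 dt2 by simp
    finally show ?thesis .
  qed
  have key2: "(q*q+1)/(u*u) = (a+d)/s"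
  proof -
    have "(a+d)*p* s = (a+d)*(p* s)" by (simp add: mult.assoc)
    then have "((q*q+1)* s)* s = ((a+d)*p)* s" using key1 ps by (simp add: algebra_simps)
    then have "(q*q+1)* s = (a+d)*p" using s0 by simp
    then show ?thesis using s0 p0 uu by (simp add: field_simps)
  qed
  have trG: "trace (transpose B ** G ** B) = G$1$1 * p + (G$1$2 + G$2$1) * q + G$2$2 * ((a+d)/s)" for G
  proof -
    have "trace (transpose B ** G ** B) = G$1$1*(u*u) + (G$1$2+G$2$1)*q + G$2$2*((q*q+1)/(u*u))"
      unfolding B_def by (rule tr_chol[OF u0])
    then show ?thesis unfolding key2 unfolding uu .
  qed
  have tr1: "trace (transpose B ** G1 ** B) = s"
  proof -
    have "trace (transpose B ** G1 ** B) * s = a * (p* s) + 2*b*(q* s) + c*(a+d)"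
      unfolding trG using g1(3) s0 by (simp add: a_def b_def c_def field_simps)
    also have "\<dots> = 2*(a*c - b*b) + (c*d - 2*b*e + a*g)" unfolding ps qs by (simp add: algebra_simps)
    also have "\<dots> = s * s" using dt1 tdef ss by simp
    finally show ?thesis using s0 by simp
  qed
  have tr2': "trace (transpose B ** G2 ** B) = s"
  proof -
    have "trace (transpose B ** G2 ** B) * s = d * (p* s) + 2*e*(q* s) + g*(a+d)"
      unfolding trG using g2(3) s0 by (simp add: d_def e_def g_def field_simps)
    also have "\<dots> = 2*(d*g - e*e) + (c*d - 2*b*e + a*g)" unfolding ps qs by (simp add: algebra_simps)
    also have "\<dots> = s * s" using dt2 tdef ss by simp
    finally show ?thesis using s0 by simp
  qed
  obtain L where L: "L \<ge> 1" "L + 1/L = s" "ell s = L" using ell_props[OF s2] by blast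
  have "L*L + 1/(L*L) = (L + 1/L)*(L + 1/L) - 2" using L(1) by (simp add: field_simps)
  also have "\<dots> = \<tau>" using L(2) ss by simp
  finally have "ell \<tau> = L*L" using ell_inv[of "L*L"] L(1) mult_mono[OF L(1) L(1)] by simp
  then have sq: "sqrt (ell \<tau>) = L" using L(1) by simp
  have P1: "transpose B ** G1 ** B \<in> SL_sym_pos" and P2: "transpose B ** G2 ** B \<in> SL_sym_pos"
    using congr_spd[OF _ dB] G1 G2 by auto
  have "B \<in> SL2" using dB by (simp add: SL2_def)
  moreover have "lambda_max (transpose B ** G1 ** B) = sqrt (ell \<tau>)" using lam_spd[OF P1] tr1 L(3) sq by simp
  moreover have "lambda_max (transpose B ** G2 ** B) = sqrt (ell \<tau>)" using lam_spd[OF P2] tr2' L(3) sq by simp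
  ultimately show ?thesis unfolding \<tau>_def by blast
qed

theorem mainTheorem7:
  assumes "G1 \<in> SL_sym_pos" and "G2 \<in> SL_sym_pos" and "H1 \<in> SL_sym_pos" and "H2 \<in> SL_sym_pos"
  shows "K_min G1 G2 H1 H2 =
           sqrt (lambda_max (inv_sqrt G1 ** G2 ** inv_sqrt G1) *
                 lambda_max (inv_sqrt H1 ** H2 ** inv_sqrt H1))
         \<and> K_min G1 G2 H1 H2 \<in> K_values G1 G2 H1 H2"
proof -
  define mG where "mG = ell (trace (adj2 G1 ** G2))"
  define mH where "mH = ell (trace (adj2 H1 ** H2))"
  have eG: "lambda_max (inv_sqrt G1 ** G2 ** inv_sqrt G1) = mG" using lam_inv_sqrt assms by (simp add: mG_def)
  have eH: "lambda_max (inv_sqrt H1 ** H2 ** inv_sqrt H1) = mH" using lam_inv_sqrt assms by (simp add: mH_def)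
  have mG0: "mG \<ge> 0" and mH0: "mH \<ge> 0" unfolding mG_def mH_def
    using ell_props(1)[OF lower(1)[OF assms(1,2), of "mat 1"]] ell_props(1)[OF lower(1)[OF assms(3,4), of "mat 1"]]
    by simp_all
  let ?V = "sqrt (mG * mH)"
  have mem: "?V \<in> K_values G1 G2 H1 H2"
  proof -
    obtain B where B: "B \<in> SL2" "lambda_max (transpose B ** G1 ** B) = sqrt mG" "lambda_max (transpose B ** G2 ** B) = sqrt mG"
      using attain[OF assms(1,2)] unfolding mG_def by blast
    obtain A where A: "A \<in> SL2" "lambda_max (transpose A ** H1 ** A) = sqrt mH" "lambda_max (transpose A ** H2 ** A) = sqrt mH"
      using attain[OF assms(3,4)] unfolding mH_def by blast
    have "?V = max (lambda_max (transpose B ** G1 ** B) * lambda_max (transpose A ** H1 ** A))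
          (lambda_max (transpose B ** G2 ** B) * lambda_max (transpose A ** H2 ** A))"
      using A B by (simp add: real_sqrt_mult)
    then show ?thesis unfolding K_values_def using A(1) B(1) by blast
  qed
  have low: "?V \<le> x" if x: "x \<in> K_values G1 G2 H1 H2" for x
  proof -
    obtain A B where AB: "A \<in> SL2" "B \<in> SL2" and xd: "x = max (lambda_max (transpose B ** G1 ** B) * lambda_max (transpose A ** H1 ** A))
          (lambda_max (transpose B ** G2 ** B) * lambda_max (transpose A ** H2 ** A))"
      using x unfolding K_values_def by blast
    have dA: "det A = 1" and dB: "det B = 1" using AB by (simp_all add: SL2_def)
    define x1 where "x1 = lambda_max (transpose B ** G1 ** B)"
    define x2 where "x2 = lambda_max (transpose B ** G2 ** B)"
    define y1 where "y1 = lambda_max (transpose A ** H1 ** A)"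
    define y2 where "y2 = lambda_max (transpose A ** H2 ** A)"
    have pos: "x1 \<ge> 1" "x2 \<ge> 1" "y1 \<ge> 1" "y2 \<ge> 1"
      using lam_ge1 assms dA dB by (simp_all add: x1_def x2_def y1_def y2_def)
    have gx: "mG \<le> x1 * x2" using lower(2)[OF assms(1,2) dB] by (simp add: mG_def x1_def x2_def)
    have gy: "mH \<le> y1 * y2" using lower(2)[OF assms(3,4) dA] by (simp add: mH_def y1_def y2_def)
    have xm: "x = max (x1*y1) (x2*y2)" using xd by (simp add: x1_def x2_def y1_def y2_def)
    have c1: "mG * mH \<le> (x1*x2)*(y1*y2)" using gx gy mG0 mH0 by (intro mult_mono) auto
    have c2: "(x1*x2)*(y1*y2) = (x1*y1)*(x2*y2)" by (simp add: algebra_simps)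
    have n1: "0 \<le> x1*y1" "0 \<le> x2*y2" using pos by (intro mult_nonneg_nonneg; simp)+
    have c3: "(x1*y1)*(x2*y2) \<le> x * x" unfolding xm using n1 by (intro mult_mono) auto
    have "mG * mH \<le> x * x" using c1 c2 c3 by linarith
    then have "?V \<le> sqrt (x*x)" by (rule real_sqrt_le_mono)
    also have "\<dots> = x"
    proof -
      have "0 \<le> x1*y1" using pos by (intro mult_nonneg_nonneg) auto
      then have "0 \<le> x" using xm by simp
      then show ?thesis by simp
    qed
    finally show ?thesis .
  qed
  have "K_min G1 G2 H1 H2 = ?V" unfolding K_min_def by (rule cInf_eq_minimum[OF mem low])
  then show ?thesis using mem eG eH by simp
qed


end
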